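(* Let $\eta(0)\in\Omega$. Then the vector $B_L\Gamma\sin(\eta)$ is a conserved quantity of the dynamical system $\dot\eta=B_S^T(\eta)\omega_G$, $M\dot\omega_G=-A\omega_G-B_G\Gamma\sin(\eta)+u$ over the interval of existence of the solution.
   Context: A power network is modeled on a connected undirected graph with $n$ nodes and $m$ edges, nodes partitioned into $n_g$ generator and $n_\ell$ load nodes. $B$ is an incidence matrix partitioned row-wise as $B=\begin{bmatrix}B_G^T & B_L^T\end{bmatrix}^T$ (generator rows, load rows). $\Gamma=\mathrm{diag}(\gamma_k)$ is positive definite, $M,A$ are positive definite diagonal, $u\in\mathbb{R}^{n_g}$. $\sin,\cos$ act elementwise, $\Omega=(-\frac{\pi}{2},\frac{\pi}{2})^m$, $\Gamma'(\eta)=\Gamma\,\mathrm{diag}(\cos(\eta_k))$, and $B_S(\eta)=B_G\big(I-\Gamma'(\eta)B_L^T(B_L\Gamma'(\eta)B_L^T)^{-1}B_L\big)$. The state is $(\eta,\omega_G)\in\operatorname{im}B^T\times\mathbb{R}^{n_g}$. *)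

theory Defs
  imports "HOL-Analysis.Analysis"
begin

definition mdiag :: "real ^ 'n \<Rightarrow> real ^ 'n ^ 'n" where
  "mdiag v = (\<chi> i j. if i = j then v $ i else 0)"

definition vsin :: "real ^ 'n \<Rightarrow> real ^ 'n" where
  "vsin v = (\<chi> k. sin (v $ k))"

definition vcos :: "real ^ 'n \<Rightarrow> real ^ 'n" where
  "vcos v = (\<chi> k. cos (v $ k))"

definition Omega :: "(real ^ 'e) set" where
  "Omega = {x. \<forall>k. - (pi/2) < x $ k \<and> x $ k < pi/2}"

text \<open>Full incidence matrix B (nodes = generators + loads), entry (node, edge).\<close>
definition Bfull :: "real ^ 'e ^ 'g \<Rightarrow> real ^ 'e ^ 'l \<Rightarrow> ('g + 'l) \<Rightarrow> 'e \<Rightarrow> real" where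
  "Bfull BG BL x e = (case x of Inl g \<Rightarrow> BG $ g $ e | Inr l \<Rightarrow> BL $ l $ e)"

definition is_incidence :: "real ^ 'e ^ 'g \<Rightarrow> real ^ 'e ^ 'l \<Rightarrow> bool" where
  "is_incidence BG BL \<longleftrightarrow> (\<forall>e. \<exists>i j. i \<noteq> j \<and> Bfull BG BL i e = 1 \<and> Bfull BG BL j e = -1
       \<and> (\<forall>k. k \<noteq> i \<and> k \<noteq> j \<longrightarrow> Bfull BG BL k e = 0))"

definition adjacent :: "real ^ 'e ^ 'g \<Rightarrow> real ^ 'e ^ 'l \<Rightarrow> ('g + 'l) \<Rightarrow> ('g + 'l) \<Rightarrow> bool" where
  "adjacent BG BL x y \<longleftrightarrow> x \<noteq> y \<and> (\<exists>e. Bfull BG BL x e \<noteq> 0 \<and> Bfull BG BL y e \<noteq> 0)"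

definition graph_connected :: "real ^ 'e ^ 'g \<Rightarrow> real ^ 'e ^ 'l \<Rightarrow> bool" where
  "graph_connected BG BL \<longleftrightarrow> (\<forall>x y. (x, y) \<in> {(a, b). adjacent BG BL a b}\<^sup>*)"

definition Gammap :: "real ^ 'e \<Rightarrow> real ^ 'e \<Rightarrow> real ^ 'e ^ 'e" where
  "Gammap \<gamma> \<eta> = mdiag \<gamma> ** mdiag (vcos \<eta>)"

definition BS :: "real ^ 'e ^ 'g \<Rightarrow> real ^ 'e ^ 'l \<Rightarrow> real ^ 'e \<Rightarrow> real ^ 'e \<Rightarrow> real ^ 'e ^ 'g" where
  "BS BG BL \<gamma> \<eta> = BG ** (mat 1 - Gammap \<gamma> \<eta> ** transpose BL
      ** matrix_inv (BL ** Gammap \<gamma> \<eta> ** transpose BL) ** BL)"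

end

theory Submission
  imports Defs
begin

lemma msub_ldistrib: "(A::real^'n^'m) ** (B - C) = A ** B - A ** C"
  by (simp add: matrix_matrix_mult_def vec_eq_iff algebra_simps sum_subtractf)

lemma transpose_sub: "transpose ((A::real^'n^'m) - B) = transpose A - transpose B"
  by (simp add: transpose_def vec_eq_iff)

lemma if0_mult: "(if P then x else (0::real)) * y = (if P then x * y else 0)" by simp

lemma mdiag_mult: "mdiag (a::real^'n) ** mdiag b = mdiag (a * b)"
  by (auto simp: mdiag_def matrix_matrix_mult_def vec_eq_iff if0_mult)

lemma mdiag_mv: "mdiag (a::real^'n) *v v = a * v"
  by (auto simp: mdiag_def matrix_vector_mult_def vec_eq_iff if0_mult)

lemma transpose_mdiag: "transpose (mdiag (a::real^'n)) = mdiag a"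
  by (auto simp: mdiag_def transpose_def vec_eq_iff)

lemma conn_zero:
  fixes BG :: "real ^ 'e::finite ^ 'g::finite" and BL :: "real ^ 'e ^ 'l::finite"
  assumes inc: "is_incidence BG BL" and conn: "graph_connected BG BL"
    and y: "transpose BL *v x = 0"
  shows "x = 0"
proof -
  define f :: "'g + 'l \<Rightarrow> real" where "f = (\<lambda>z. case z of Inl g \<Rightarrow> 0 | Inr l \<Rightarrow> x $ l)"
  have col: "(\<Sum>k\<in>UNIV. Bfull BG BL k e * f k) = 0" for e
  proof -
    have "(\<Sum>k\<in>UNIV. Bfull BG BL k e * f k) = (\<Sum>k\<in>UNIV <+> UNIV. Bfull BG BL k e * f k)"
      by (simp only: UNIV_Plus_UNIV)
    also have "\<dots> = (\<Sum>l\<in>UNIV. BL $ l $ e * x $ l)"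
      by (simp only: sum.Plus[OF finite finite]) (simp add: Bfull_def f_def)
    also have "\<dots> = (transpose BL *v x) $ e"
      by (simp add: matrix_vector_mult_def transpose_def)
    finally show ?thesis using y by simp
  qed
  have eqij: "f i = f j" if "i \<noteq> j" "Bfull BG BL i e = 1" "Bfull BG BL j e = -1"
       "\<forall>k. k \<noteq> i \<and> k \<noteq> j \<longrightarrow> Bfull BG BL k e = 0" for i j e
  proof -
    have z: "\<forall>k\<in>UNIV - {i,j}. Bfull BG BL k e * f k = 0" using that(4) by simp
    have "(\<Sum>k\<in>UNIV. Bfull BG BL k e * f k) = (\<Sum>k\<in>{i,j}. Bfull BG BL k e * f k)"
      by (rule sum.mono_neutral_right[OF finite subset_UNIV z])
    also have "\<dots> = f i - f j" using that(1,2,3) by simp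
    finally show ?thesis using col[of e] by simp
  qed
  have adj: "f p = f q" if "adjacent BG BL p q" for p q
  proof -
    from that obtain e where pq: "p \<noteq> q" "Bfull BG BL p e \<noteq> 0" "Bfull BG BL q e \<noteq> 0"
      unfolding adjacent_def by blast
    from inc obtain i j where ij: "i \<noteq> j" "Bfull BG BL i e = 1" "Bfull BG BL j e = -1"
       "\<forall>k. k \<noteq> i \<and> k \<noteq> j \<longrightarrow> Bfull BG BL k e = 0" unfolding is_incidence_def by blast
    have "f i = f j" by (rule eqij[OF ij])
    moreover have "p = i \<or> p = j" "q = i \<or> q = j" using pq ij by auto
    ultimately show ?thesis using pq(1) by metis
  qed
  have all: "f p = f q" for p q
  proof -
    have "(p, q) \<in> {(a, b). adjacent BG BL a b}\<^sup>*" using conn unfolding graph_connected_def by blast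
    then show ?thesis
    proof (induction rule: rtrancl_induct)
      case base then show ?case by simp
    next
      case (step y z)
      from step(2) have "adjacent BG BL y z" by simp
      then have "f y = f z" by (rule adj)
      with step(3) show ?case by simp
    qed
  qed
  show ?thesis
  proof (subst vec_eq_iff, intro allI)
    fix l
    have "x $ l = f (Inr l)" by (simp add: f_def)
    also have "\<dots> = f (Inl undefined)" by (rule all)
    finally show "x $ l = 0 $ l" by (simp add: f_def)
  qed
qed

lemma K_inv:
  fixes BG :: "real ^ 'e::finite ^ 'g::finite" and BL :: "real ^ 'e ^ 'l::finite"
  assumes inc: "is_incidence BG BL" and conn: "graph_connected BG BL"
    and c: "\<forall>k. c $ k > 0"
  shows "invertible (BL ** mdiag c ** transpose BL)"
proof -
  have "\<forall>x. (BL ** mdiag c ** transpose BL) *v x = 0 \<longrightarrow> x = 0"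
  proof (intro allI impI)
    fix x assume h: "(BL ** mdiag c ** transpose BL) *v x = 0"
    define y where "y = transpose BL *v x"
    have "0 = inner x ((BL ** mdiag c ** transpose BL) *v x)" using h by simp
    also have "\<dots> = inner x (BL *v (c * y))"
      by (simp add: y_def matrix_vector_mul_assoc[symmetric] mdiag_mv)
    also have "\<dots> = inner y (c * y)"
      by (simp add: y_def dot_lmul_matrix[symmetric])
    also have "\<dots> = (\<Sum>k\<in>UNIV. c $ k * (y $ k)^2)"
      by (simp add: inner_vec_def power2_eq_square mult.commute mult.left_commute)
    finally have "(\<Sum>k\<in>UNIV. c $ k * (y $ k)^2) = 0" by simp
    moreover have nn: "\<forall>k\<in>UNIV. 0 \<le> c $ k * (y $ k)^2"
      using c by (metis less_imp_le mult_nonneg_nonneg zero_le_power2)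
    ultimately have "\<forall>k\<in>UNIV. c $ k * (y $ k)^2 = 0"
      using sum_nonneg_eq_0_iff[of UNIV "\<lambda>k. c $ k * (y $ k)^2"] by simp
    then have "y = 0"
    proof (subst vec_eq_iff, intro allI)
      fix k assume "\<forall>k\<in>UNIV. c $ k * (y $ k)^2 = 0"
      then have "c $ k * (y $ k)^2 = 0" by blast
      moreover have "c $ k \<noteq> 0" using c by (metis less_irrefl)
      ultimately show "y $ k = 0 $ k" by simp
    qed
    then show "x = 0" by (intro conn_zero[OF inc conn]) (use y_def in simp)
  qed
  then have "\<exists>B. B ** (BL ** mdiag c ** transpose BL) = mat 1"
    by (simp only: matrix_left_invertible_ker)
  then show ?thesis
    by (simp only: invertible_left_inverse)
qed

lemma key_zero:
  fixes L :: "real ^ 'e::finite ^ 'l::finite" and D :: "real ^ 'e ^ 'e" and G :: "real ^ 'e ^ 'g::finite"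
  assumes D: "transpose D = D" and Ki: "Ki ** (L ** D ** transpose L) = mat 1"
  shows "L ** D ** transpose (G ** (mat 1 - D ** transpose L ** Ki ** L)) = 0"
proof -
  have tK: "transpose (L ** D ** transpose L) = L ** D ** transpose L"
    by (simp add: matrix_transpose_mul D matrix_mul_assoc)
  have KKi: "(L ** D ** transpose L) ** transpose Ki = mat 1"
  proof -
    have "(L ** D ** transpose L) ** transpose Ki = transpose (Ki ** transpose (L ** D ** transpose L))"
      by (simp add: matrix_transpose_mul)
    also have "\<dots> = mat 1" by (simp only: tK Ki transpose_mat)
    finally show ?thesis .
  qed
  have t1: "transpose (mat 1 - D ** transpose L ** Ki ** L) = mat 1 - transpose L ** transpose Ki ** (L ** D)"
    by (simp add: transpose_sub matrix_transpose_mul D matrix_mul_assoc)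
  have "L ** D ** (mat 1 - transpose L ** transpose Ki ** (L ** D))
      = L ** D - ((L ** D ** transpose L) ** transpose Ki) ** (L ** D)"
    by (simp add: msub_ldistrib matrix_mul_assoc)
  also have "\<dots> = 0" by (simp add: KKi)
  finally have z: "L ** D ** (mat 1 - transpose L ** transpose Ki ** (L ** D)) = 0" .
  have "L ** D ** transpose (G ** (mat 1 - D ** transpose L ** Ki ** L))
      = (L ** D ** (mat 1 - transpose L ** transpose Ki ** (L ** D))) ** transpose G"
    by (simp only: matrix_transpose_mul t1 matrix_mul_assoc)
  also have "\<dots> = 0" by (simp add: z)
  finally show ?thesis .
qed

theorem proposition3:
  fixes BG :: "real ^ 'e::finite ^ 'g::finite"
    and BL :: "real ^ 'e ^ 'l::finite"
    and \<gamma> :: "real ^ 'e"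
    and m a u :: "real ^ 'g"
    and T :: "real set"
    and \<eta> d\<eta> :: "real \<Rightarrow> real ^ 'e"
    and \<omega> d\<omega> :: "real \<Rightarrow> real ^ 'g"
  assumes inc: "is_incidence BG BL"
    and conn: "graph_connected BG BL"
    and gamma_pos: "\<forall>k. \<gamma> $ k > 0"
    and M_pos: "\<forall>i. m $ i > 0"
    and A_pos: "\<forall>i. a $ i > 0"
    and T_int: "is_interval T" and T0: "0 \<in> T"
    and eta0: "\<eta> 0 \<in> Omega"
    and in_Omega: "\<forall>t\<in>T. \<eta> t \<in> Omega"
    and in_imBT: "\<forall>t\<in>T. \<exists>\<theta>G \<theta>L. \<eta> t = transpose BG *v \<theta>G + transpose BL *v \<theta>L"
    and deta: "\<forall>t\<in>T. (\<eta> has_vector_derivative d\<eta> t) (at t within T)"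
    and domega: "\<forall>t\<in>T. (\<omega> has_vector_derivative d\<omega> t) (at t within T)"
    and ode1: "\<forall>t\<in>T. d\<eta> t = transpose (BS BG BL \<gamma> (\<eta> t)) *v \<omega> t"
    and ode2: "\<forall>t\<in>T. mdiag m *v d\<omega> t
                 = - (mdiag a *v \<omega> t) - BG *v (mdiag \<gamma> *v vsin (\<eta> t)) + u"
  shows "\<forall>t\<in>T. BL *v (mdiag \<gamma> *v vsin (\<eta> t)) = BL *v (mdiag \<gamma> *v vsin (\<eta> 0))"
proof -
  have Gp: "Gammap \<gamma> v = mdiag (\<gamma> * vcos v)" for v
    by (simp add: Gammap_def mdiag_mult)
  have zero: "BL *v (Gammap \<gamma> (\<eta> t) *v d\<eta> t) = 0" if t: "t \<in> T" for t
  proof -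
    define c where "c = \<gamma> * vcos (\<eta> t)"
    have cpos: "\<forall>k. c $ k > 0"
    proof
      fix k
      have "- (pi/2) < \<eta> t $ k" "\<eta> t $ k < pi/2" using in_Omega t unfolding Omega_def by auto
      then have "cos (\<eta> t $ k) > 0" by (rule cos_gt_zero_pi)
      then show "c $ k > 0" using gamma_pos by (simp add: c_def vcos_def)
    qed
    have inv: "invertible (BL ** mdiag c ** transpose BL)" by (rule K_inv[OF inc conn cpos])
    define Ki where "Ki = matrix_inv (BL ** mdiag c ** transpose BL)"
    have "Ki ** (BL ** mdiag c ** transpose BL) = mat 1"
      using inv unfolding invertible_def Ki_def matrix_inv_def by (metis (mono_tags, lifting) someI_ex)
    then have "BL ** mdiag c ** transpose (BG ** (mat 1 - mdiag c ** transpose BL ** Ki ** BL)) = 0"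
      by (intro key_zero) (simp_all add: transpose_mdiag)
    then have "BL ** mdiag c ** transpose (BS BG BL \<gamma> (\<eta> t)) = 0"
      by (simp add: BS_def Gp c_def Ki_def)
    then have "(BL ** mdiag c ** transpose (BS BG BL \<gamma> (\<eta> t))) *v \<omega> t = 0" by simp
    then have "BL *v (mdiag c *v (transpose (BS BG BL \<gamma> (\<eta> t)) *v \<omega> t)) = 0"
      by (simp only: matrix_vector_mul_assoc matrix_mul_assoc)
    moreover have "d\<eta> t = transpose (BS BG BL \<gamma> (\<eta> t)) *v \<omega> t" using ode1 t by blast
    ultimately show ?thesis by (simp only: Gp c_def)
  qed
  have comp: "\<forall>t\<in>T. (BL *v (mdiag \<gamma> *v vsin (\<eta> t))) $ l = (BL *v (mdiag \<gamma> *v vsin (\<eta> 0))) $ l" for l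
  proof -
    define g where "g = (\<lambda>s. \<Sum>e\<in>UNIV. BL $ l $ e * (\<gamma> $ e * sin (\<eta> s $ e)))"
    have geq: "(BL *v (mdiag \<gamma> *v vsin (\<eta> s))) $ l = g s" for s
      by (simp only: mdiag_mv) (simp add: g_def matrix_vector_mult_def vsin_def)
    have der: "(g has_field_derivative 0) (at t within T)" if t: "t \<in> T" for t
    proof -
      have de: "((\<lambda>s. \<eta> s $ e) has_field_derivative d\<eta> t $ e) (at t within T)" for e
        using bounded_linear.has_vector_derivative[OF bounded_linear_vec_nth deta[rule_format, OF t], of e]
        by (simp add: has_real_derivative_iff_has_vector_derivative)
      have "(g has_field_derivative (\<Sum>e\<in>UNIV. BL $ l $ e * (\<gamma> $ e * (cos (\<eta> t $ e) * d\<eta> t $ e)))) (at t within T)"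
        unfolding g_def
        by (intro DERIV_sum DERIV_cmult DERIV_chain2[OF DERIV_sin] de)
      also have "(\<Sum>e\<in>UNIV. BL $ l $ e * (\<gamma> $ e * (cos (\<eta> t $ e) * d\<eta> t $ e)))
          = (BL *v (Gammap \<gamma> (\<eta> t) *v d\<eta> t)) $ l"
        by (simp only: Gp mdiag_mv) (simp add: matrix_vector_mult_def vcos_def mult.assoc)
      also have "\<dots> = 0" using zero[OF t] by simp
      finally show ?thesis .
    qed
    obtain k where "\<forall>x\<in>T. g x = k"
      using has_field_derivative_zero_constant[OF is_interval_convex[OF T_int] der] by blast
    then show ?thesis using T0 geq by simp
  qed
  show ?thesis using comp by (simp add: vec_eq_iff)
qed

end
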